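(* Assume Assumption A(c),(d), let $x^\star$ be the weak-Minty solution of A(d), and suppose the iterates of (VrFRBS) use estimators $\widetilde S^k$ in class (U) with parameters $\kappa,\Theta,\hat\Theta,\{\delta_k\},\{\Delta_k\}$. For $\gamma>0$ define $$\mathcal P_k:=\|y^k-x^\star\|^2+(1-\gamma\eta)\|y^k-x^{k-1}\|^2+\tfrac{2\eta^2(1-\kappa)}{\kappa}\Delta_{k-1}+\tfrac{2\eta^2\hat\Theta}{\kappa}\|x^{k-1}-x^{k-2}\|^2 .$$ Then for any $c>0$ and all $k\ge0$, almost surely, $$\mathbb E_k[\mathcal P_{k+1}]\le\mathcal P_k-\Big[1-\tfrac{4\rho}{\eta}-2L^2\eta\big(4\rho+\tfrac1\gamma+c\big)\Big]\|y^k-x^k\|^2-\Big[1-\gamma\eta-2L^2\eta\big(4\rho+\tfrac1\gamma+c\big)\Big]\|y^k-x^{k-1}\|^2-\tfrac{\eta[c\kappa L^2-2\eta(\Theta+\hat\Theta)]}{\kappa}\|x^k-x^{k-1}\|^2+\tfrac{2\eta^2\delta_k}{\kappa}.$$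
   Context: Setting: $G:\mathbb{R}^p\to\mathbb{R}^p$, $T:\mathbb{R}^p\rightrightarrows\mathbb{R}^p$, $\Phi:=G+T$, $\mathrm{zer}\,\Phi:=\{x:0\in Gx+Tx\}$, $J_{\eta T}:=(\mathbb{I}+\eta T)^{-1}$; either (E) $Gx=\mathbb{E}_{\zeta\sim\mathbb P}[\mathbf G(x,\zeta)]$ or (F) $Gx=\frac1n\sum_{i=1}^nG_ix$. Assumption A: (a) $\mathrm{zer}\,\Phi\neq\emptyset$; (b) in (E), $\mathbb{E}_\zeta\|\mathbf G(x,\zeta)-Gx\|^2\le\sigma^2$; (c) in (E), $\mathbb{E}_\zeta\|\mathbf G(x,\zeta)-\mathbf G(y,\zeta)\|^2\le L^2\|x-y\|^2$, in (F), $\frac1n\sum_i\|G_ix-G_iy\|^2\le L^2\|x-y\|^2$ (so $G$ is $L$-Lipschitz); (d) there exist $\rho\ge0$ and $x^\star\in\mathrm{zer}\,\Phi$ with $\langle Gx+v,x-x^\star\rangle\ge-\rho\|Gx+v\|^2$ for all $(x,v)\in\mathrm{gra}\,T$. Scheme (VrFRBS): stepsize $\eta>0$, $x^0$, $x^{-2}=x^{-1}=x^0$, $\xi^0\in Tx^0$; for $k\ge0$: $S^k:=2Gx^k-Gx^{k-1}$, estimator $\widetilde S^k$, $x^{k+1}\in J_{\eta T}(x^k-\eta\widetilde S^k)$, $\xi^{k+1}:=\eta^{-1}(x^k-\eta\widetilde S^k-x^{k+1})\in Tx^{k+1}$. Notation: $e^k:=\widetilde S^k-S^k$, $w^k:=Gx^k+\xi^k$,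 $\hat w^k:=Gx^{k-1}+\xi^k$, $y^k:=x^k+\eta\hat w^k$. $\mathcal F_k$: $\sigma$-algebra of all randomness up to iteration $k$ (so $x^j,\xi^j$, $j\le k$, hence $w^k,y^k$, are $\mathcal F_k$-measurable); $\mathbb E_k[\cdot]:=\mathbb E[\cdot\mid\mathcal F_k]$. Class (U): there exist nonnegative random variables $\Delta_k$ ($\Delta_{-1}:=0$), $\kappa\in(0,1]$, $\Theta,\hat\Theta\ge0$, nonnegative $\{\delta_k\}$ with a.s. for all $k\ge0$: $\mathbb E_k[e^k]=0$; $\mathbb E_k\|e^k\|^2\le\mathbb E_k[\Delta_k]$; $\mathbb E_k[\Delta_k]\le(1-\kappa)\Delta_{k-1}+\Theta\|x^k-x^{k-1}\|^2+\hat\Theta\|x^{k-1}-x^{k-2}\|^2+\delta_k$. *)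

theory Defs
  imports "HOL-Probability.Probability"
begin

definition assmAc_E :: "'z measure \<Rightarrow> ('v::euclidean_space \<Rightarrow> 'z \<Rightarrow> 'v) \<Rightarrow> ('v \<Rightarrow> 'v) \<Rightarrow> real \<Rightarrow> bool" where
  "assmAc_E P Gz G L \<longleftrightarrow> prob_space P \<and>
     (\<forall>x. integrable P (Gz x) \<and> G x = (\<integral>\<zeta>. Gz x \<zeta> \<partial>P)) \<and>
     (\<forall>x y. integrable P (\<lambda>\<zeta>. (norm (Gz x \<zeta> - Gz y \<zeta>))\<^sup>2) \<and>
            (\<integral>\<zeta>. (norm (Gz x \<zeta> - Gz y \<zeta>))\<^sup>2 \<partial>P) \<le> L\<^sup>2 * (norm (x - y))\<^sup>2)"

definition assmAc_F :: "nat \<Rightarrow> (nat \<Rightarrow> 'v::euclidean_space \<Rightarrow> 'v) \<Rightarrow> ('v \<Rightarrow> 'v) \<Rightarrow> real \<Rightarrow> bool" where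
  "assmAc_F n Gi G L \<longleftrightarrow> n \<ge> 1 \<and>
     (\<forall>x. G x = (1 / real n) *\<^sub>R (\<Sum>i<n. Gi i x)) \<and>
     (\<forall>x y. (1 / real n) * (\<Sum>i<n. (norm (Gi i x - Gi i y))\<^sup>2) \<le> L\<^sup>2 * (norm (x - y))\<^sup>2)"

definition weak_minty :: "('v::euclidean_space \<Rightarrow> 'v) \<Rightarrow> ('v \<Rightarrow> 'v set) \<Rightarrow> real \<Rightarrow> 'v \<Rightarrow> bool" where
  "weak_minty G T \<rho> xs \<longleftrightarrow> \<rho> \<ge> 0 \<and> 0 \<in> (\<lambda>v. G xs + v) ` T xs \<and>
     (\<forall>x v. v \<in> T x \<longrightarrow> inner (G x + v) (x - xs) \<ge> - \<rho> * (norm (G x + v))\<^sup>2)"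

definition subalg_filtration :: "'a measure \<Rightarrow> (nat \<Rightarrow> 'a measure) \<Rightarrow> bool" where
  "subalg_filtration M F \<longleftrightarrow> (\<forall>k. subalgebra M (F k)) \<and> (\<forall>k. sets (F k) \<subseteq> sets (F (Suc k)))"

definition Dprev :: "(nat \<Rightarrow> 'a \<Rightarrow> real) \<Rightarrow> nat \<Rightarrow> 'a \<Rightarrow> real" where
  "Dprev \<Delta> k \<omega> = (if k = 0 then 0 else \<Delta> (k - 1) \<omega>)"

text \<open>\<open>y^k = x^k + \<eta> (G x^{k-1} + \<xi>^k)\<close>, with \<open>x^{-1} = x^0\<close> (natural subtraction).\<close>
definition yseq :: "('v::euclidean_space \<Rightarrow> 'v) \<Rightarrow> real \<Rightarrow> (nat \<Rightarrow> 'a \<Rightarrow> 'v) \<Rightarrow> (nat \<Rightarrow> 'a \<Rightarrow> 'v) \<Rightarrow> nat \<Rightarrow> 'a \<Rightarrow> 'v" where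
  "yseq G \<eta> x \<xi> k \<omega> = x k \<omega> + \<eta> *\<^sub>R (G (x (k - 1) \<omega>) + \<xi> k \<omega>)"

definition Pk :: "('v::euclidean_space \<Rightarrow> 'v) \<Rightarrow> real \<Rightarrow> real \<Rightarrow> real \<Rightarrow> real \<Rightarrow> 'v \<Rightarrow>
    (nat \<Rightarrow> 'a \<Rightarrow> 'v) \<Rightarrow> (nat \<Rightarrow> 'a \<Rightarrow> 'v) \<Rightarrow> (nat \<Rightarrow> 'a \<Rightarrow> real) \<Rightarrow> nat \<Rightarrow> 'a \<Rightarrow> real" where
  "Pk G \<eta> \<gamma> \<kappa> \<Theta>h xs x \<xi> \<Delta> k \<omega> =
     (norm (yseq G \<eta> x \<xi> k \<omega> - xs))\<^sup>2
     + (1 - \<gamma> * \<eta>) * (norm (yseq G \<eta> x \<xi> k \<omega> - x (k - 1) \<omega>))\<^sup>2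
     + 2 * \<eta>\<^sup>2 * (1 - \<kappa>) / \<kappa> * Dprev \<Delta> k \<omega>
     + 2 * \<eta>\<^sup>2 * \<Theta>h / \<kappa> * (norm (x (k - 1) \<omega> - x (k - 2) \<omega>))\<^sup>2"

end

theory Submission
  imports Defs
begin


lemma lip_E:
  assumes "assmAc_E P Gz G L"
  shows "(norm (G x - G y))\<^sup>2 \<le> L\<^sup>2 * (norm (x - y))\<^sup>2"
proof -
  interpret prob_space P using assms unfolding assmAc_E_def by auto
  have ix: "integrable P (Gz x)" and iy: "integrable P (Gz y)" and gx: "G x = (\<integral>\<zeta>. Gz x \<zeta> \<partial>P)"
    and gy: "G y = (\<integral>\<zeta>. Gz y \<zeta> \<partial>P)"
    and i2: "integrable P (\<lambda>\<zeta>. (norm (Gz x \<zeta> - Gz y \<zeta>))\<^sup>2)"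
    and b2: "(\<integral>\<zeta>. (norm (Gz x \<zeta> - Gz y \<zeta>))\<^sup>2 \<partial>P) \<le> L\<^sup>2 * (norm (x - y))\<^sup>2"
    using assms unfolding assmAc_E_def by auto
  define h where "h = (\<lambda>\<zeta>. norm (Gz x \<zeta> - Gz y \<zeta>))"
  have hm: "h \<in> borel_measurable P" unfolding h_def using ix iy by measurable
  have i2': "integrable P (\<lambda>\<zeta>. (h \<zeta>)^2)" using i2 unfolding h_def by simp
  have ih: "integrable P h" by (rule square_integrable_imp_integrable[OF hm i2'])
  have "G x - G y = (\<integral>\<zeta>. Gz x \<zeta> - Gz y \<zeta> \<partial>P)" using gx gy ix iy by simp
  then have n1: "norm (G x - G y) \<le> (\<integral>\<zeta>. h \<zeta> \<partial>P)" unfolding h_def by (metis integral_norm_bound)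
  have "0 \<le> variance h" by (rule variance_positive)
  then have v: "(\<integral>\<zeta>. h \<zeta> \<partial>P)\<^sup>2 \<le> (\<integral>\<zeta>. (h \<zeta>)\<^sup>2 \<partial>P)" using variance_eq[OF ih i2'] by simp
  have "(norm (G x - G y))\<^sup>2 \<le> (\<integral>\<zeta>. h \<zeta> \<partial>P)\<^sup>2"
    using n1 by (simp add: power_mono)
  also have "\<dots> \<le> L\<^sup>2 * (norm (x - y))\<^sup>2" using v b2 unfolding h_def by simp
  finally show ?thesis .
qed

lemma lip_F:
  assumes "assmAc_F n Gi G L"
  shows "(norm (G x - G y))\<^sup>2 \<le> L\<^sup>2 * (norm (x - y))\<^sup>2"
proof -
  have n: "n \<ge> 1" and g: "\<And>x. G x = (1 / real n) *\<^sub>R (\<Sum>i<n. Gi i x)"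
    and b: "(1 / real n) * (\<Sum>i<n. (norm (Gi i x - Gi i y))\<^sup>2) \<le> L\<^sup>2 * (norm (x - y))\<^sup>2"
    using assms unfolding assmAc_F_def by auto
  have "G x - G y = (1 / real n) *\<^sub>R (\<Sum>i<n. Gi i x - Gi i y)"
    using g[of x] g[of y] by (simp add: sum_subtractf scaleR_diff_right)
  then have "norm (G x - G y) = (1 / real n) * norm (\<Sum>i<n. Gi i x - Gi i y)" by simp
  also have "\<dots> \<le> (1 / real n) * (\<Sum>i<n. norm (Gi i x - Gi i y))"
    by (intro mult_left_mono norm_sum) auto
  finally have n1: "norm (G x - G y) \<le> (1 / real n) * (\<Sum>i<n. norm (Gi i x - Gi i y))" .
  have "(norm (G x - G y))\<^sup>2 \<le> ((1 / real n) * (\<Sum>i<n. norm (Gi i x - Gi i y)))\<^sup>2"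
    using n1 by (simp add: power_mono)
  also have "\<dots> = (1 / real n)^2 * (\<Sum>i<n. norm (Gi i x - Gi i y))\<^sup>2" by (simp add: power2_eq_square field_simps)
  also have "\<dots> \<le> (1 / real n)^2 * ((\<Sum>i<n. (norm (Gi i x - Gi i y))\<^sup>2) * real n)"
    using sum_squared_le_sum_of_squares[of "\<lambda>i. norm (Gi i x - Gi i y)" "{..<n}"]
    by (intro mult_left_mono) auto
  also have "\<dots> = (1 / real n) * (\<Sum>i<n. (norm (Gi i x - Gi i y))\<^sup>2)"
    using n by (simp add: power2_eq_square field_simps)
  also have "\<dots> \<le> L\<^sup>2 * (norm (x - y))\<^sup>2" by (rule b)
  finally show ?thesis .
qed



lemma scalar_ineq:
  fixes Y a b d dm P W g2 I J U1 U2 Ee ED Dp L \<rho> \<eta> \<gamma> c \<kappa> \<Theta> \<Theta>h \<delta> :: real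
  assumes U1: "U1 = Y - 2 * \<eta> * (I + \<eta> * J) + \<eta>\<^sup>2 * W"
    and J: "2 * J = W + P - g2" and I: "I \<ge> - \<rho> * W"
    and W: "W \<le> 2 * P + 2 * g2" and a: "a = \<eta>\<^sup>2 * P" and g2: "g2 \<le> L\<^sup>2 * d" and g0: "g2 \<ge> 0"
    and d: "d \<le> 2 * a + 2 * b" and U2: "U2 = \<eta>\<^sup>2 * g2"
    and pos: "\<rho> \<ge> 0" "\<eta> > 0" "\<gamma> > 0" "c > 0" "\<kappa> > 0" "\<kappa> \<le> 1" "\<Theta> \<ge> 0" "\<Theta>h \<ge> 0"
    and E: "0 \<le> Ee" "Ee \<le> ED" "ED \<le> (1 - \<kappa>) * Dp + \<Theta> * d + \<Theta>h * dm + \<delta>"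
  shows "U1 + \<eta>\<^sup>2 * Ee + (1 - \<gamma> * \<eta>) * (U2 + \<eta>\<^sup>2 * Ee)
          + 2 * \<eta>\<^sup>2 * (1 - \<kappa>) / \<kappa> * ED + 2 * \<eta>\<^sup>2 * \<Theta>h / \<kappa> * d
      \<le> Y + (1 - \<gamma> * \<eta>) * b + 2 * \<eta>\<^sup>2 * (1 - \<kappa>) / \<kappa> * Dp + 2 * \<eta>\<^sup>2 * \<Theta>h / \<kappa> * dm
        - (1 - 4 * \<rho> / \<eta> - 2 * L\<^sup>2 * \<eta> * (4 * \<rho> + 1 / \<gamma> + c)) * a
        - (1 - \<gamma> * \<eta> - 2 * L\<^sup>2 * \<eta> * (4 * \<rho> + 1 / \<gamma> + c)) * b
        - \<eta> * (c * \<kappa> * L\<^sup>2 - 2 * \<eta> * (\<Theta> + \<Theta>h)) / \<kappa> * d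
        + 2 * \<eta>\<^sup>2 * \<delta> / \<kappa>"
proof -
  define K where "K = 4 * \<rho> + 1 / \<gamma> + c"
  have s1: "U1 \<le> Y + 2 * \<eta> * \<rho> * W + \<eta>\<^sup>2 * g2 - a"
  proof -
    have "- 2 * \<eta> * I \<le> 2 * \<eta> * \<rho> * W" using I pos mult_left_mono[OF I, of "2*\<eta>"] by (simp add: algebra_simps)
    moreover have "\<eta>\<^sup>2 * (2 * J) = \<eta>\<^sup>2 * (W + P - g2)" using J by simp
    ultimately show ?thesis using U1 a by (simp add: algebra_simps power2_eq_square)
  qed
  have s2: "2 * \<eta> * \<rho> * W \<le> (4 * \<rho> / \<eta>) * a + 4 * \<eta> * \<rho> * g2"
  proof -
    have "2 * \<eta> * \<rho> * W \<le> 2 * \<eta> * \<rho> * (2 * P + 2 * g2)" using W pos by (intro mult_left_mono) auto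
    also have "\<dots> = (4 * \<rho> / \<eta>) * a + 4 * \<eta> * \<rho> * g2" using a pos by (simp add: field_simps power2_eq_square)
    finally show ?thesis .
  qed
  have q: "\<eta>\<^sup>2 * (2 - \<gamma> * \<eta>) \<le> \<eta> / \<gamma>"
  proof -
    have "0 \<le> (1 - \<gamma> * \<eta>)\<^sup>2" by simp
    then have "\<gamma> * (\<eta> * (2 - \<gamma> * \<eta>)) \<le> 1" by (simp add: power2_eq_square algebra_simps)
    then have "\<eta> * (2 - \<gamma> * \<eta>) \<le> 1 / \<gamma>" using pos by (simp add: field_simps)
    then have "\<eta> * (\<eta> * (2 - \<gamma> * \<eta>)) \<le> \<eta> * (1 / \<gamma>)" using pos by (intro mult_left_mono) auto
    then show ?thesis by (simp add: power2_eq_square algebra_simps)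
  qed
  have s3: "\<eta>\<^sup>2 * g2 + (1 - \<gamma> * \<eta>) * U2 + 4 * \<eta> * \<rho> * g2 \<le> (\<eta> / \<gamma> + 4 * \<eta> * \<rho>) * L\<^sup>2 * d"
  proof -
    have "\<eta>\<^sup>2 * g2 + (1 - \<gamma> * \<eta>) * U2 = (\<eta>\<^sup>2 * (2 - \<gamma> * \<eta>)) * g2" using U2 by (simp add: algebra_simps)
    also have "\<dots> \<le> (\<eta> / \<gamma>) * g2" using q g0 by (intro mult_right_mono) auto
    finally have A: "\<eta>\<^sup>2 * g2 + (1 - \<gamma> * \<eta>) * U2 \<le> (\<eta> / \<gamma>) * g2" .
    have "(\<eta> / \<gamma> + 4 * \<eta> * \<rho>) * g2 \<le> (\<eta> / \<gamma> + 4 * \<eta> * \<rho>) * (L\<^sup>2 * d)"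
      using g2 pos by (intro mult_left_mono) auto
    with A show ?thesis by (simp add: algebra_simps)
  qed
  have s4: "\<eta>\<^sup>2 * Ee + (1 - \<gamma> * \<eta>) * (\<eta>\<^sup>2 * Ee) \<le> 2 * \<eta>\<^sup>2 * ED"
  proof -
    have "0 \<le> \<gamma> * \<eta> * (\<eta>\<^sup>2 * Ee)" using pos E by simp
    moreover have "\<eta>\<^sup>2 * Ee \<le> \<eta>\<^sup>2 * ED" using E by (intro mult_left_mono) auto
    ultimately show ?thesis by (simp add: algebra_simps)
  qed
  have s5: "2 * \<eta>\<^sup>2 * (1 - \<kappa>) / \<kappa> * ED + 2 * \<eta>\<^sup>2 * ED
      \<le> 2 * \<eta>\<^sup>2 * (1 - \<kappa>) / \<kappa> * Dp + 2 * \<eta>\<^sup>2 * \<Theta> / \<kappa> * d + 2 * \<eta>\<^sup>2 * \<Theta>h / \<kappa> * dm + 2 * \<eta>\<^sup>2 * \<delta> / \<kappa>"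
  proof -
    have "2 * \<eta>\<^sup>2 * (1 - \<kappa>) / \<kappa> * ED + 2 * \<eta>\<^sup>2 * ED = (2 * \<eta>\<^sup>2 / \<kappa>) * ED"
      using pos by (simp add: field_simps)
    also have "\<dots> \<le> (2 * \<eta>\<^sup>2 / \<kappa>) * ((1 - \<kappa>) * Dp + \<Theta> * d + \<Theta>h * dm + \<delta>)"
      using E pos by (intro mult_left_mono) auto
    also have "\<dots> = 2 * \<eta>\<^sup>2 * (1 - \<kappa>) / \<kappa> * Dp + 2 * \<eta>\<^sup>2 * \<Theta> / \<kappa> * d + 2 * \<eta>\<^sup>2 * \<Theta>h / \<kappa> * dm + 2 * \<eta>\<^sup>2 * \<delta> / \<kappa>"
      using pos by (simp add: field_simps)
    finally show ?thesis .
  qed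
  have s6: "(\<eta> / \<gamma> + 4 * \<eta> * \<rho>) * L\<^sup>2 * d + \<eta> * c * L\<^sup>2 * d \<le> 2 * L\<^sup>2 * \<eta> * K * a + 2 * L\<^sup>2 * \<eta> * K * b"
  proof -
    have K0: "L\<^sup>2 * \<eta> * K \<ge> 0" using pos unfolding K_def by (intro mult_nonneg_nonneg) auto
    have "(\<eta> / \<gamma> + 4 * \<eta> * \<rho>) * L\<^sup>2 * d + \<eta> * c * L\<^sup>2 * d = (L\<^sup>2 * \<eta> * K) * d"
      unfolding K_def by (simp add: algebra_simps)
    also have "\<dots> \<le> (L\<^sup>2 * \<eta> * K) * (2 * a + 2 * b)" using K0 d by (intro mult_left_mono) auto
    finally show ?thesis by (simp add: algebra_simps)
  qed
  have eqR: "Y + (1 - \<gamma> * \<eta>) * b + 2 * \<eta>\<^sup>2 * (1 - \<kappa>) / \<kappa> * Dp + 2 * \<eta>\<^sup>2 * \<Theta>h / \<kappa> * dm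
        - (1 - 4 * \<rho> / \<eta> - 2 * L\<^sup>2 * \<eta> * (4 * \<rho> + 1 / \<gamma> + c)) * a
        - (1 - \<gamma> * \<eta> - 2 * L\<^sup>2 * \<eta> * (4 * \<rho> + 1 / \<gamma> + c)) * b
        - \<eta> * (c * \<kappa> * L\<^sup>2 - 2 * \<eta> * (\<Theta> + \<Theta>h)) / \<kappa> * d
        + 2 * \<eta>\<^sup>2 * \<delta> / \<kappa>
     = Y + 2 * \<eta>\<^sup>2 * (1 - \<kappa>) / \<kappa> * Dp + 2 * \<eta>\<^sup>2 * \<Theta>h / \<kappa> * dm
        - a + (4 * \<rho> / \<eta>) * a + (2 * L\<^sup>2 * \<eta> * K * a + 2 * L\<^sup>2 * \<eta> * K * b)
        - \<eta> * c * L\<^sup>2 * d + 2 * \<eta>\<^sup>2 * \<Theta> / \<kappa> * d + 2 * \<eta>\<^sup>2 * \<Theta>h / \<kappa> * d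
        + 2 * \<eta>\<^sup>2 * \<delta> / \<kappa>"
    unfolding K_def using pos by (simp add: field_simps power2_eq_square)
  have dist: "(1 - \<gamma> * \<eta>) * (U2 + \<eta>\<^sup>2 * Ee) = (1 - \<gamma> * \<eta>) * U2 + (1 - \<gamma> * \<eta>) * (\<eta>\<^sup>2 * Ee)"
    by (simp add: distrib_left)
  show ?thesis unfolding eqR dist using s1 s2 s3 s4 s5 s6 by linarith
qed



lemma vec_ineq:
  fixes G :: "'v::euclidean_space \<Rightarrow> 'v" and xk xkm xkmm \<xi>k xs :: 'v
    and Ee ED Dp L \<rho> \<eta> \<gamma> c \<kappa> \<Theta> \<Theta>h \<delta> :: real
  assumes lip: "\<And>x y. (norm (G x - G y))\<^sup>2 \<le> L\<^sup>2 * (norm (x - y))\<^sup>2"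
    and minty: "inner (G xk + \<xi>k) (xk - xs) \<ge> - \<rho> * (norm (G xk + \<xi>k))\<^sup>2"
    and pos: "\<rho> \<ge> 0" "\<eta> > 0" "\<gamma> > 0" "c > 0" "\<kappa> > 0" "\<kappa> \<le> 1" "\<Theta> \<ge> 0" "\<Theta>h \<ge> 0"
    and E: "0 \<le> Ee" "Ee \<le> ED" "ED \<le> (1 - \<kappa>) * Dp + \<Theta> * (norm (xk - xkm))\<^sup>2 + \<Theta>h * (norm (xkm - xkmm))\<^sup>2 + \<delta>"
    and yk: "yk = xk + \<eta> *\<^sub>R (G xkm + \<xi>k)"
  shows "(norm (xk - \<eta> *\<^sub>R G xk + \<eta> *\<^sub>R G xkm - xs))\<^sup>2 + \<eta>\<^sup>2 * Ee
          + (1 - \<gamma> * \<eta>) * ((norm (\<eta> *\<^sub>R G xkm - \<eta> *\<^sub>R G xk))\<^sup>2 + \<eta>\<^sup>2 * Ee)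
          + 2 * \<eta>\<^sup>2 * (1 - \<kappa>) / \<kappa> * ED + 2 * \<eta>\<^sup>2 * \<Theta>h / \<kappa> * (norm (xk - xkm))\<^sup>2
      \<le> (norm (yk - xs))\<^sup>2 + (1 - \<gamma> * \<eta>) * (norm (yk - xkm))\<^sup>2
        + 2 * \<eta>\<^sup>2 * (1 - \<kappa>) / \<kappa> * Dp + 2 * \<eta>\<^sup>2 * \<Theta>h / \<kappa> * (norm (xkm - xkmm))\<^sup>2
        - (1 - 4 * \<rho> / \<eta> - 2 * L\<^sup>2 * \<eta> * (4 * \<rho> + 1 / \<gamma> + c)) * (norm (yk - xk))\<^sup>2
        - (1 - \<gamma> * \<eta> - 2 * L\<^sup>2 * \<eta> * (4 * \<rho> + 1 / \<gamma> + c)) * (norm (yk - xkm))\<^sup>2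
        - \<eta> * (c * \<kappa> * L\<^sup>2 - 2 * \<eta> * (\<Theta> + \<Theta>h)) / \<kappa> * (norm (xk - xkm))\<^sup>2
        + 2 * \<eta>\<^sup>2 * \<delta> / \<kappa>"
proof -
  define p where "p = G xkm + \<xi>k"
  define w where "w = G xk + \<xi>k"
  define g where "g = G xk - G xkm"
  define A where "A = xk - xs"
  have wpg: "w = p + g" unfolding w_def p_def g_def by simp
  have yk': "yk = xk + \<eta> *\<^sub>R p" unfolding yk p_def ..
  have e1: "xk - \<eta> *\<^sub>R G xk + \<eta> *\<^sub>R G xkm - xs = (A + \<eta> *\<^sub>R p) - \<eta> *\<^sub>R w"
    unfolding A_def p_def w_def by (simp add: algebra_simps)
  have U1: "(norm (xk - \<eta> *\<^sub>R G xk + \<eta> *\<^sub>R G xkm - xs))\<^sup>2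
      = (norm (yk - xs))\<^sup>2 - 2 * \<eta> * (inner w (xk - xs) + \<eta> * inner w p) + \<eta>\<^sup>2 * (norm w)\<^sup>2"
  proof -
    have n: "(norm (B - \<eta> *\<^sub>R w))\<^sup>2 = (norm B)\<^sup>2 - 2 * \<eta> * inner w B + \<eta>\<^sup>2 * (norm w)\<^sup>2" for B
      unfolding power2_norm_eq_inner by (simp add: inner_diff_left inner_diff_right inner_commute algebra_simps power2_eq_square)
    have i: "inner w (A + \<eta> *\<^sub>R p) = inner w (xk - xs) + \<eta> * inner w p"
      unfolding A_def by (simp add: inner_add_right)
    have yy: "yk - xs = A + \<eta> *\<^sub>R p" unfolding yk' A_def by simp
    show ?thesis unfolding e1 n i yy ..
  qed
  have J: "2 * inner w p = (norm w)\<^sup>2 + (norm p)\<^sup>2 - (norm g)\<^sup>2"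
    unfolding wpg by (simp add: power2_norm_eq_inner inner_add_left inner_add_right inner_commute algebra_simps)
  have I: "inner w (xk - xs) \<ge> - \<rho> * (norm w)\<^sup>2" using minty unfolding w_def .
  have W: "(norm w)\<^sup>2 \<le> 2 * (norm p)\<^sup>2 + 2 * (norm g)\<^sup>2"
  proof -
    have "0 \<le> (norm (p - g))\<^sup>2" by simp
    then show ?thesis unfolding wpg
      by (simp add: power2_norm_eq_inner inner_add_left inner_add_right inner_diff_left inner_diff_right inner_commute algebra_simps)
  qed
  have a: "(norm (yk - xk))\<^sup>2 = \<eta>\<^sup>2 * (norm p)\<^sup>2" unfolding yk' by (simp add: power_mult_distrib)
  have g2: "(norm g)\<^sup>2 \<le> L\<^sup>2 * (norm (xk - xkm))\<^sup>2" unfolding g_def by (rule lip)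
  have d: "(norm (xk - xkm))\<^sup>2 \<le> 2 * (norm (yk - xk))\<^sup>2 + 2 * (norm (yk - xkm))\<^sup>2"
  proof -
    have "xk - xkm = (yk - xkm) - (yk - xk)" by simp
    then have "(norm (xk - xkm))\<^sup>2 = (norm ((yk - xkm) - (yk - xk)))\<^sup>2" by simp
    moreover have "(norm (u - v))\<^sup>2 \<le> 2 * (norm u)\<^sup>2 + 2 * (norm v)\<^sup>2" for u v :: 'v
    proof -
      have "0 \<le> (norm (u + v))\<^sup>2" by simp
      then show ?thesis
        by (simp add: power2_norm_eq_inner inner_add_left inner_add_right inner_diff_left inner_diff_right inner_commute algebra_simps)
    qed
    ultimately show ?thesis by (metis add.commute)
  qed
  have U2: "(norm (\<eta> *\<^sub>R G xkm - \<eta> *\<^sub>R G xk))\<^sup>2 = \<eta>\<^sup>2 * (norm g)\<^sup>2"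
  proof -
    have "\<eta> *\<^sub>R G xkm - \<eta> *\<^sub>R G xk = (- \<eta>) *\<^sub>R g" unfolding g_def by (simp add: algebra_simps)
    then show ?thesis by (simp add: power_mult_distrib)
  qed
  show ?thesis
    by (rule scalar_ineq[OF U1 J I W a g2 _ d U2 pos E]) simp
qed



lemma (in sigma_finite_subalgebra) cond_sq:
  fixes u e :: "'a \<Rightarrow> 'v::euclidean_space" and \<eta> :: real
  assumes um: "u \<in> borel_measurable F" and em: "e \<in> borel_measurable M"
    and ui: "integrable M (\<lambda>\<omega>. (norm (u \<omega>))\<^sup>2)" and ei: "integrable M (\<lambda>\<omega>. (norm (e \<omega>))\<^sup>2)"
    and unb: "\<And>b. b \<in> Basis \<Longrightarrow> AE \<omega> in M. real_cond_exp M F (\<lambda>\<omega>. inner (e \<omega>) b) \<omega> = 0"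
  shows "AE \<omega> in M. real_cond_exp M F (\<lambda>\<omega>. (norm (u \<omega> - \<eta> *\<^sub>R e \<omega>))\<^sup>2) \<omega>
           = (norm (u \<omega>))\<^sup>2 + \<eta>\<^sup>2 * real_cond_exp M F (\<lambda>\<omega>. (norm (e \<omega>))\<^sup>2) \<omega>"
proof -
  have umM: "u \<in> borel_measurable M" using measurable_from_subalg[OF subalg um] .
  define h where "h = (\<lambda>b \<omega>. inner (u \<omega>) b * inner (e \<omega>) b)"
  have hi: "integrable M (h b)" for b :: 'v
  proof -
    have i1: "integrable M (\<lambda>\<omega>. (norm b)\<^sup>2 * ((norm (u \<omega>))\<^sup>2 + (norm (e \<omega>))\<^sup>2))"
      using ui ei by auto
    have m1: "h b \<in> borel_measurable M" unfolding h_def using umM em by measurable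
    have b1: "norm (h b \<omega>) \<le> norm ((norm b)\<^sup>2 * ((norm (u \<omega>))\<^sup>2 + (norm (e \<omega>))\<^sup>2))" for \<omega>
    proof -
      have "\<bar>inner (u \<omega>) b\<bar> * \<bar>inner (e \<omega>) b\<bar> \<le> (norm (u \<omega>) * norm b) * (norm (e \<omega>) * norm b)"
        by (intro mult_mono Cauchy_Schwarz_ineq2) auto
      also have "\<dots> = (norm b)\<^sup>2 * (norm (u \<omega>) * norm (e \<omega>))" by (simp add: power2_eq_square)
      also have "\<dots> \<le> (norm b)\<^sup>2 * ((norm (u \<omega>))\<^sup>2 + (norm (e \<omega>))\<^sup>2)"
      proof (rule mult_left_mono)
        have "0 \<le> (norm (u \<omega>) - norm (e \<omega>))\<^sup>2" by simp
        then show "norm (u \<omega>) * norm (e \<omega>) \<le> (norm (u \<omega>))\<^sup>2 + (norm (e \<omega>))\<^sup>2"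
          by (simp add: power2_eq_square algebra_simps) (smt (verit) mult_nonneg_nonneg norm_ge_zero)
      qed simp
      finally show ?thesis unfolding h_def by (simp add: abs_mult)
    qed
    show ?thesis by (rule Bochner_Integration.integrable_bound[OF i1 m1]) (rule AE_I2, rule b1)
  qed
  have expand: "(norm (u \<omega> - \<eta> *\<^sub>R e \<omega>))\<^sup>2 = (norm (u \<omega>))\<^sup>2 + ((- 2 * \<eta>) * (\<Sum>b\<in>Basis. h b \<omega>) + \<eta>\<^sup>2 * (norm (e \<omega>))\<^sup>2)" for \<omega>
  proof -
    have "(norm (u \<omega> - \<eta> *\<^sub>R e \<omega>))\<^sup>2 = (norm (u \<omega>))\<^sup>2 - 2 * \<eta> * inner (u \<omega>) (e \<omega>) + \<eta>\<^sup>2 * (norm (e \<omega>))\<^sup>2"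
      unfolding power2_norm_eq_inner by (simp add: inner_diff_left inner_diff_right inner_commute algebra_simps power2_eq_square)
    moreover have "inner (u \<omega>) (e \<omega>) = (\<Sum>b\<in>Basis. h b \<omega>)" unfolding h_def by (rule euclidean_inner)
    ultimately show ?thesis by simp
  qed
  have si: "integrable M (\<lambda>\<omega>. \<Sum>b\<in>Basis. h b \<omega>)" using hi by auto
  have ci: "integrable M (\<lambda>\<omega>. (- 2 * \<eta>) * (\<Sum>b\<in>Basis. h b \<omega>))" using si by auto
  have ei2: "integrable M (\<lambda>\<omega>. \<eta>\<^sup>2 * (norm (e \<omega>))\<^sup>2)" using ei by auto
  have A1: "AE \<omega> in M. real_cond_exp M F (\<lambda>\<omega>. (norm (u \<omega>))\<^sup>2 + ((- 2 * \<eta>) * (\<Sum>b\<in>Basis. h b \<omega>) + \<eta>\<^sup>2 * (norm (e \<omega>))\<^sup>2)) \<omega>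
      = real_cond_exp M F (\<lambda>\<omega>. (norm (u \<omega>))\<^sup>2) \<omega> + real_cond_exp M F (\<lambda>\<omega>. (- 2 * \<eta>) * (\<Sum>b\<in>Basis. h b \<omega>) + \<eta>\<^sup>2 * (norm (e \<omega>))\<^sup>2) \<omega>"
    using ui ci ei2 by (intro real_cond_exp_add) auto
  have A2: "AE \<omega> in M. real_cond_exp M F (\<lambda>\<omega>. (- 2 * \<eta>) * (\<Sum>b\<in>Basis. h b \<omega>) + \<eta>\<^sup>2 * (norm (e \<omega>))\<^sup>2) \<omega>
      = real_cond_exp M F (\<lambda>\<omega>. (- 2 * \<eta>) * (\<Sum>b\<in>Basis. h b \<omega>)) \<omega> + real_cond_exp M F (\<lambda>\<omega>. \<eta>\<^sup>2 * (norm (e \<omega>))\<^sup>2) \<omega>"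
    using ci ei2 by (intro real_cond_exp_add) auto
  have A3: "AE \<omega> in M. real_cond_exp M F (\<lambda>\<omega>. (norm (u \<omega>))\<^sup>2) \<omega> = (norm (u \<omega>))\<^sup>2"
    using ui um by (intro real_cond_exp_F_meas) auto
  have A4: "AE \<omega> in M. real_cond_exp M F (\<lambda>\<omega>. (- 2 * \<eta>) * (\<Sum>b\<in>Basis. h b \<omega>)) \<omega> = (- 2 * \<eta>) * real_cond_exp M F (\<lambda>\<omega>. \<Sum>b\<in>Basis. h b \<omega>) \<omega>"
    using si by (rule real_cond_exp_cmult)
  have A5: "AE \<omega> in M. real_cond_exp M F (\<lambda>\<omega>. \<eta>\<^sup>2 * (norm (e \<omega>))\<^sup>2) \<omega> = \<eta>\<^sup>2 * real_cond_exp M F (\<lambda>\<omega>. (norm (e \<omega>))\<^sup>2) \<omega>"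
    using ei by (rule real_cond_exp_cmult)
  have A6: "AE \<omega> in M. real_cond_exp M F (\<lambda>\<omega>. \<Sum>b\<in>Basis. h b \<omega>) \<omega> = (\<Sum>b\<in>Basis. real_cond_exp M F (h b) \<omega>)"
    using hi by (rule real_cond_exp_sum)
  have A7: "AE \<omega> in M. \<forall>b\<in>Basis. real_cond_exp M F (h b) \<omega> = 0"
  proof (rule AE_ball_countable')
    fix b :: 'v assume b: "b \<in> Basis"
    have "AE \<omega> in M. real_cond_exp M F (\<lambda>\<omega>. inner (u \<omega>) b * inner (e \<omega>) b) \<omega> = inner (u \<omega>) b * real_cond_exp M F (\<lambda>\<omega>. inner (e \<omega>) b) \<omega>"
      using hi[of b] um em unfolding h_def by (intro real_cond_exp_mult) auto
    then show "AE \<omega> in M. real_cond_exp M F (h b) \<omega> = 0" using unb[OF b] unfolding h_def by eventually_elim simp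
  qed (simp add: countable_finite)
  have eqf: "(\<lambda>\<omega>. (norm (u \<omega> - \<eta> *\<^sub>R e \<omega>))\<^sup>2) = (\<lambda>\<omega>. (norm (u \<omega>))\<^sup>2 + ((- 2 * \<eta>) * (\<Sum>b\<in>Basis. h b \<omega>) + \<eta>\<^sup>2 * (norm (e \<omega>))\<^sup>2))"
    using expand by auto
  show ?thesis unfolding eqf using A1 A2 A3 A4 A5 A6 A7 by eventually_elim simp
qed


lemma sqi_add:
  fixes f g :: "'a \<Rightarrow> 'v::euclidean_space"
  assumes "f \<in> borel_measurable M" "g \<in> borel_measurable M"
    "integrable M (\<lambda>\<omega>. (norm (f \<omega>))\<^sup>2)" "integrable M (\<lambda>\<omega>. (norm (g \<omega>))\<^sup>2)"
  shows "integrable M (\<lambda>\<omega>. (norm (f \<omega> + g \<omega>))\<^sup>2)"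
proof -
  have i1: "integrable M (\<lambda>\<omega>. 2 * (norm (f \<omega>))\<^sup>2 + 2 * (norm (g \<omega>))\<^sup>2)" using assms by auto
  have m1: "(\<lambda>\<omega>. (norm (f \<omega> + g \<omega>))\<^sup>2) \<in> borel_measurable M" using assms by measurable
  have b1: "norm ((norm (f \<omega> + g \<omega>))\<^sup>2) \<le> norm (2 * (norm (f \<omega>))\<^sup>2 + 2 * (norm (g \<omega>))\<^sup>2)" for \<omega>
  proof -
    have "0 \<le> (norm (f \<omega> - g \<omega>))\<^sup>2" by simp
    then have "(norm (f \<omega> + g \<omega>))\<^sup>2 \<le> 2 * (norm (f \<omega>))\<^sup>2 + 2 * (norm (g \<omega>))\<^sup>2"
      unfolding power2_norm_eq_inner by (simp add: inner_add_left inner_add_right inner_diff_left inner_diff_right inner_commute algebra_simps)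
    then show ?thesis by simp
  qed
  show ?thesis by (rule Bochner_Integration.integrable_bound[OF i1 m1]) (rule AE_I2, rule b1)
qed

lemma sqi_scale:
  fixes f :: "'a \<Rightarrow> 'v::euclidean_space"
  assumes "integrable M (\<lambda>\<omega>. (norm (f \<omega>))\<^sup>2)"
  shows "integrable M (\<lambda>\<omega>. (norm (c *\<^sub>R f \<omega>))\<^sup>2)"
  using assms by (simp add: power_mult_distrib)

lemma sqi_diff:
  fixes f g :: "'a \<Rightarrow> 'v::euclidean_space"
  assumes "f \<in> borel_measurable M" "g \<in> borel_measurable M"
    "integrable M (\<lambda>\<omega>. (norm (f \<omega>))\<^sup>2)" "integrable M (\<lambda>\<omega>. (norm (g \<omega>))\<^sup>2)"
  shows "integrable M (\<lambda>\<omega>. (norm (f \<omega> - g \<omega>))\<^sup>2)"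
proof -
  have "integrable M (\<lambda>\<omega>. (norm (f \<omega> + (-1) *\<^sub>R g \<omega>))\<^sup>2)"
    using assms by (intro sqi_add sqi_scale) auto
  then show ?thesis by simp
qed

theorem mainTheorem4:
  fixes M :: "'a measure" and F :: "nat \<Rightarrow> 'a measure"
    and G :: "'v::euclidean_space \<Rightarrow> 'v" and T :: "'v \<Rightarrow> 'v set"
    and P :: "'z measure" and Gz :: "'v \<Rightarrow> 'z \<Rightarrow> 'v"
    and n :: nat and Gi :: "nat \<Rightarrow> 'v \<Rightarrow> 'v"
    and L \<rho> \<eta> \<gamma> \<kappa> \<Theta> \<Theta>h :: real and xs :: 'v
    and x \<xi> St :: "nat \<Rightarrow> 'a \<Rightarrow> 'v"
    and \<Delta> :: "nat \<Rightarrow> 'a \<Rightarrow> real" and \<delta> :: "nat \<Rightarrow> real"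
  assumes prob: "prob_space M"
    and filt: "subalg_filtration M F"
    \<comment> \<open>Assumption A(c), in setting (E) or in setting (F)\<close>
    and Ac: "assmAc_E P Gz G L \<or> assmAc_F n Gi G L"
    \<comment> \<open>Assumption A(d)\<close>
    and Ad: "weak_minty G T \<rho> xs"
    \<comment> \<open>the scheme (VrFRBS)\<close>
    and eta: "\<eta> > 0"
    and xi0: "\<And>\<omega>. \<omega> \<in> space M \<Longrightarrow> \<xi> 0 \<omega> \<in> T (x 0 \<omega>)"
    and xi_def: "\<And>k \<omega>. \<omega> \<in> space M \<Longrightarrow>
                   \<xi> (Suc k) \<omega> = (1 / \<eta>) *\<^sub>R (x k \<omega> - \<eta> *\<^sub>R St k \<omega> - x (Suc k) \<omega>)"
    and resolvent: "\<And>k \<omega>. \<omega> \<in> space M \<Longrightarrow> \<xi> (Suc k) \<omega> \<in> T (x (Suc k) \<omega>)"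
    \<comment> \<open>adaptedness and integrability\<close>
    and x_meas: "\<And>j k. j \<le> k \<Longrightarrow> x j \<in> borel_measurable (F k)"
    and xi_meas: "\<And>j k. j \<le> k \<Longrightarrow> \<xi> j \<in> borel_measurable (F k)"
    and St_meas: "\<And>k. St k \<in> borel_measurable M"
    and x_int: "\<And>k. integrable M (\<lambda>\<omega>. (norm (x k \<omega>))\<^sup>2)"
    and xi_int: "\<And>k. integrable M (\<lambda>\<omega>. (norm (\<xi> k \<omega>))\<^sup>2)"
    and St_int: "\<And>k. integrable M (\<lambda>\<omega>. (norm (St k \<omega>))\<^sup>2)"
    \<comment> \<open>class (U)\<close>
    and Delta_meas: "\<And>k. \<Delta> k \<in> borel_measurable M"
    and Delta_int: "\<And>k. integrable M (\<Delta> k)"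
    and Delta_nonneg: "\<And>k \<omega>. \<omega> \<in> space M \<Longrightarrow> \<Delta> k \<omega> \<ge> 0"
    and kappa: "0 < \<kappa>" "\<kappa> \<le> 1"
    and Theta: "\<Theta> \<ge> 0" "\<Theta>h \<ge> 0"
    and delta: "\<And>k. \<delta> k \<ge> 0"
    and unbiased: "\<And>k b. b \<in> Basis \<Longrightarrow>
        AE \<omega> in M. real_cond_exp M (F k)
          (\<lambda>\<omega>. inner (St k \<omega> - (2 *\<^sub>R G (x k \<omega>) - G (x (k - 1) \<omega>))) b) \<omega> = 0"
    and var_bound: "\<And>k. AE \<omega> in M.
        real_cond_exp M (F k) (\<lambda>\<omega>. (norm (St k \<omega> - (2 *\<^sub>R G (x k \<omega>) - G (x (k - 1) \<omega>))))\<^sup>2) \<omega>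
          \<le> real_cond_exp M (F k) (\<Delta> k) \<omega>"
    and Delta_rec: "\<And>k. AE \<omega> in M.
        real_cond_exp M (F k) (\<Delta> k) \<omega>
          \<le> (1 - \<kappa>) * Dprev \<Delta> k \<omega> + \<Theta> * (norm (x k \<omega> - x (k - 1) \<omega>))\<^sup>2
            + \<Theta>h * (norm (x (k - 1) \<omega> - x (k - 2) \<omega>))\<^sup>2 + \<delta> k"
    and gamma: "\<gamma> > 0"
  shows "\<forall>c>0. \<forall>k. AE \<omega> in M.
    real_cond_exp M (F k) (Pk G \<eta> \<gamma> \<kappa> \<Theta>h xs x \<xi> \<Delta> (Suc k)) \<omega>
      \<le> Pk G \<eta> \<gamma> \<kappa> \<Theta>h xs x \<xi> \<Delta> k \<omega>
        - (1 - 4 * \<rho> / \<eta> - 2 * L\<^sup>2 * \<eta> * (4 * \<rho> + 1 / \<gamma> + c))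
            * (norm (yseq G \<eta> x \<xi> k \<omega> - x k \<omega>))\<^sup>2
        - (1 - \<gamma> * \<eta> - 2 * L\<^sup>2 * \<eta> * (4 * \<rho> + 1 / \<gamma> + c))
            * (norm (yseq G \<eta> x \<xi> k \<omega> - x (k - 1) \<omega>))\<^sup>2
        - \<eta> * (c * \<kappa> * L\<^sup>2 - 2 * \<eta> * (\<Theta> + \<Theta>h)) / \<kappa> * (norm (x k \<omega> - x (k - 1) \<omega>))\<^sup>2
        + 2 * \<eta>\<^sup>2 * \<delta> k / \<kappa>"
proof (intro allI impI)
  fix c :: real and k :: nat
  assume c: "c > 0"
  interpret P: prob_space M by (rule prob)
  have subj: "\<And>j. subalgebra M (F j)" using filt unfolding subalg_filtration_def by auto
  interpret S: sigma_finite_subalgebra M "F k"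
    by (rule finite_measure_subalgebra_is_sigma_finite,
        rule finite_measure_subalgebra.intro[OF P.finite_measure_axioms],
        rule finite_measure_subalgebra_axioms.intro[OF subj])
  have lip: "\<And>a b. (norm (G a - G b))\<^sup>2 \<le> L\<^sup>2 * (norm (a - b))\<^sup>2"
    using Ac lip_E lip_F by blast
  have lip1: "dist (G a) (G b) \<le> \<bar>L\<bar> * dist a b" for a b
  proof -
    have "(norm (G a - G b))\<^sup>2 \<le> (\<bar>L\<bar> * norm (a - b))\<^sup>2" using lip[of a b] by (simp add: power_mult_distrib)
    then have "norm (G a - G b) \<le> \<bar>L\<bar> * norm (a - b)" by (rule power2_le_imp_le) simp
    then show ?thesis by (simp add: dist_norm)
  qed
  have Gc: "continuous_on UNIV G"
    by (rule lipschitz_on_continuous_on[of "\<bar>L\<bar>"], rule lipschitz_onI[OF lip1]) simp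
  have Gm[measurable]: "G \<in> borel_measurable borel" by (rule borel_measurable_continuous_onI[OF Gc])
  have xF[measurable]: "x k \<in> borel_measurable (F k)" "x (k - 1) \<in> borel_measurable (F k)"
    "\<xi> k \<in> borel_measurable (F k)" "x (k - 2) \<in> borel_measurable (F k)"
    using x_meas xi_meas by auto
  have xM[measurable]: "\<And>j. x j \<in> borel_measurable M"
    using x_meas measurable_from_subalg[OF subj] by blast
  have xiM[measurable]: "\<And>j. \<xi> j \<in> borel_measurable M"
    using xi_meas measurable_from_subalg[OF subj] by blast
  have Gbnd: "(norm (G z))\<^sup>2 \<le> 2 * (norm (G 0))\<^sup>2 + 2 * L\<^sup>2 * (norm z)\<^sup>2" for z
  proof -
    have "0 \<le> (norm (G z - G 0 - G 0))\<^sup>2" by simp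
    then have "(norm (G z))\<^sup>2 \<le> 2 * (norm (G z - G 0))\<^sup>2 + 2 * (norm (G 0))\<^sup>2"
      unfolding power2_norm_eq_inner by (simp add: inner_add_left inner_add_right inner_diff_left inner_diff_right inner_commute algebra_simps)
    then show ?thesis using lip[of z 0] by simp
  qed
  have Gi: "integrable M (\<lambda>\<omega>. (norm (G (x j \<omega>)))\<^sup>2)" for j
  proof -
    have i1: "integrable M (\<lambda>\<omega>. 2 * (norm (G 0))\<^sup>2 + 2 * L\<^sup>2 * (norm (x j \<omega>))\<^sup>2)"
      using x_int[of j] by (intro Bochner_Integration.integrable_add) auto
    have m1: "(\<lambda>\<omega>. (norm (G (x j \<omega>)))\<^sup>2) \<in> borel_measurable M" by measurable
    have b1: "norm ((norm (G (x j \<omega>)))\<^sup>2) \<le> norm (2 * (norm (G 0))\<^sup>2 + 2 * L\<^sup>2 * (norm (x j \<omega>))\<^sup>2)" for \<omega>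
      using Gbnd[of "x j \<omega>"] by simp
    show ?thesis by (rule Bochner_Integration.integrable_bound[OF i1 m1]) (rule AE_I2, rule b1)
  qed
  have xsi: "integrable M (\<lambda>\<omega>. (norm xs)\<^sup>2)" by simp
  define e where "e = (\<lambda>\<omega>. St k \<omega> - (2 *\<^sub>R G (x k \<omega>) - G (x (k - 1) \<omega>)))"
  define u1 where "u1 = (\<lambda>\<omega>. x k \<omega> - \<eta> *\<^sub>R G (x k \<omega>) + \<eta> *\<^sub>R G (x (k - 1) \<omega>) - xs)"
  define u2 where "u2 = (\<lambda>\<omega>. \<eta> *\<^sub>R G (x (k - 1) \<omega>) - \<eta> *\<^sub>R G (x k \<omega>))"
  have [measurable]: "St k \<in> borel_measurable M" by (rule St_meas)
  have em[measurable]: "e \<in> borel_measurable M" unfolding e_def by measurable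
  have u1m[measurable]: "u1 \<in> borel_measurable (F k)" unfolding u1_def by measurable
  have u2m[measurable]: "u2 \<in> borel_measurable (F k)" unfolding u2_def by measurable
  have u1M[measurable]: "u1 \<in> borel_measurable M" unfolding u1_def by measurable
  have u2M[measurable]: "u2 \<in> borel_measurable M" unfolding u2_def by measurable
  have i2G: "integrable M (\<lambda>\<omega>. (norm (2 *\<^sub>R G (x k \<omega>) - G (x (k - 1) \<omega>)))\<^sup>2)"
    by (rule sqi_diff) (measurable, auto intro: sqi_scale Gi)
  have ei: "integrable M (\<lambda>\<omega>. (norm (e \<omega>))\<^sup>2)"
    unfolding e_def by (rule sqi_diff[OF _ _ St_int i2G]) measurable
  have u1i: "integrable M (\<lambda>\<omega>. (norm (u1 \<omega>))\<^sup>2)"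
    unfolding u1_def
    by (intro sqi_diff sqi_add sqi_scale x_int Gi xsi; measurable)
  have u2i: "integrable M (\<lambda>\<omega>. (norm (u2 \<omega>))\<^sup>2)"
    unfolding u2_def
    by (intro sqi_diff sqi_add sqi_scale x_int Gi xsi; measurable)
  have di: "integrable M (\<lambda>\<omega>. (norm (x k \<omega> - x (k - 1) \<omega>))\<^sup>2)"
    by (intro sqi_diff x_int; measurable)
  have Dm[measurable]: "\<Delta> k \<in> borel_measurable M" by (rule Delta_meas)
  define Q where "Q = (\<lambda>\<omega>. (norm (u1 \<omega> - \<eta> *\<^sub>R e \<omega>))\<^sup>2 + (1 - \<gamma> * \<eta>) * (norm (u2 \<omega> - \<eta> *\<^sub>R e \<omega>))\<^sup>2
      + 2 * \<eta>\<^sup>2 * (1 - \<kappa>) / \<kappa> * \<Delta> k \<omega> + 2 * \<eta>\<^sup>2 * \<Theta>h / \<kappa> * (norm (x k \<omega> - x (k - 1) \<omega>))\<^sup>2)"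
  have Qeq: "Pk G \<eta> \<gamma> \<kappa> \<Theta>h xs x \<xi> \<Delta> (Suc k) \<omega> = Q \<omega>" if \<omega>: "\<omega> \<in> space M" for \<omega>
  proof -
    have ys: "yseq G \<eta> x \<xi> (Suc k) \<omega> = x k \<omega> + \<eta> *\<^sub>R G (x k \<omega>) - \<eta> *\<^sub>R St k \<omega>"
      unfolding yseq_def xi_def[OF \<omega>] using eta by (simp add: algebra_simps)
    have a1: "yseq G \<eta> x \<xi> (Suc k) \<omega> - xs = u1 \<omega> - \<eta> *\<^sub>R e \<omega>"
      unfolding ys u1_def e_def by (simp add: algebra_simps) (metis mult_2_right scaleR_left_distrib)
    have a2: "yseq G \<eta> x \<xi> (Suc k) \<omega> - x k \<omega> = u2 \<omega> - \<eta> *\<^sub>R e \<omega>"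
      unfolding ys u2_def e_def by (simp add: algebra_simps) (metis mult_2_right scaleR_left_distrib)
    have s2: "Suc k - 2 = k - 1" by simp
    show ?thesis unfolding Pk_def Q_def a1 s2 using a2 by (simp add: Dprev_def)
  qed
  have PkM: "Pk G \<eta> \<gamma> \<kappa> \<Theta>h xs x \<xi> \<Delta> (Suc k) \<in> borel_measurable M"
    unfolding Pk_def yseq_def Dprev_def by simp measurable
  have QM: "Q \<in> borel_measurable M" unfolding Q_def by measurable
  have E0: "AE \<omega> in M. real_cond_exp M (F k) (Pk G \<eta> \<gamma> \<kappa> \<Theta>h xs x \<xi> \<Delta> (Suc k)) \<omega> = real_cond_exp M (F k) Q \<omega>"
    by (rule S.real_cond_exp_cong[OF _ PkM QM]) (rule AE_I2, rule Qeq)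
  have wm: "\<rho> \<ge> 0" "\<And>z v. v \<in> T z \<Longrightarrow> inner (G z + v) (z - xs) \<ge> - \<rho> * (norm (G z + v))\<^sup>2"
    using Ad unfolding weak_minty_def by auto
  have xiT: "\<xi> k \<omega> \<in> T (x k \<omega>)" if "\<omega> \<in> space M" for \<omega>
    using that xi0 resolvent by (cases k) auto
  define Ee where "Ee = real_cond_exp M (F k) (\<lambda>\<omega>. (norm (e \<omega>))\<^sup>2)"
  define ED where "ED = real_cond_exp M (F k) (\<Delta> k)"
  have unb: "\<And>b. b \<in> Basis \<Longrightarrow> AE \<omega> in M. real_cond_exp M (F k) (\<lambda>\<omega>. inner (e \<omega>) b) \<omega> = 0"
    unfolding e_def by (rule unbiased)
  have E1: "AE \<omega> in M. real_cond_exp M (F k) (\<lambda>\<omega>. (norm (u1 \<omega> - \<eta> *\<^sub>R e \<omega>))\<^sup>2) \<omega> = (norm (u1 \<omega>))\<^sup>2 + \<eta>\<^sup>2 * Ee \<omega>"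
    unfolding Ee_def by (rule S.cond_sq[OF u1m em u1i ei unb])
  have E2: "AE \<omega> in M. real_cond_exp M (F k) (\<lambda>\<omega>. (norm (u2 \<omega> - \<eta> *\<^sub>R e \<omega>))\<^sup>2) \<omega> = (norm (u2 \<omega>))\<^sup>2 + \<eta>\<^sup>2 * Ee \<omega>"
    unfolding Ee_def by (rule S.cond_sq[OF u2m em u2i ei unb])
  have i1: "integrable M (\<lambda>\<omega>. (norm (u1 \<omega> - \<eta> *\<^sub>R e \<omega>))\<^sup>2)"
    by (intro sqi_diff sqi_scale u1i ei; measurable)
  have i2: "integrable M (\<lambda>\<omega>. (1 - \<gamma> * \<eta>) * (norm (u2 \<omega> - \<eta> *\<^sub>R e \<omega>))\<^sup>2)"
    by (intro integrable_mult_right sqi_diff sqi_scale u2i ei; measurable)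
  have i3: "integrable M (\<lambda>\<omega>. 2 * \<eta>\<^sup>2 * (1 - \<kappa>) / \<kappa> * \<Delta> k \<omega>)"
    using Delta_int[of k] by auto
  have i4: "integrable M (\<lambda>\<omega>. 2 * \<eta>\<^sup>2 * \<Theta>h / \<kappa> * (norm (x k \<omega> - x (k - 1) \<omega>))\<^sup>2)"
    using di by auto
  have EQ: "AE \<omega> in M. real_cond_exp M (F k) Q \<omega> =
      real_cond_exp M (F k) (\<lambda>\<omega>. (norm (u1 \<omega> - \<eta> *\<^sub>R e \<omega>))\<^sup>2) \<omega>
      + real_cond_exp M (F k) (\<lambda>\<omega>. (1 - \<gamma> * \<eta>) * (norm (u2 \<omega> - \<eta> *\<^sub>R e \<omega>))\<^sup>2) \<omega>
      + real_cond_exp M (F k) (\<lambda>\<omega>. 2 * \<eta>\<^sup>2 * (1 - \<kappa>) / \<kappa> * \<Delta> k \<omega>) \<omega>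
      + real_cond_exp M (F k) (\<lambda>\<omega>. 2 * \<eta>\<^sup>2 * \<Theta>h / \<kappa> * (norm (x k \<omega> - x (k - 1) \<omega>))\<^sup>2) \<omega>"
  proof -
    have a: "AE \<omega> in M. real_cond_exp M (F k) Q \<omega> =
      real_cond_exp M (F k) (\<lambda>\<omega>. (norm (u1 \<omega> - \<eta> *\<^sub>R e \<omega>))\<^sup>2 + (1 - \<gamma> * \<eta>) * (norm (u2 \<omega> - \<eta> *\<^sub>R e \<omega>))\<^sup>2
      + 2 * \<eta>\<^sup>2 * (1 - \<kappa>) / \<kappa> * \<Delta> k \<omega>) \<omega>
      + real_cond_exp M (F k) (\<lambda>\<omega>. 2 * \<eta>\<^sup>2 * \<Theta>h / \<kappa> * (norm (x k \<omega> - x (k - 1) \<omega>))\<^sup>2) \<omega>"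
      unfolding Q_def using i1 i2 i3 i4 by (intro S.real_cond_exp_add) auto
    have b: "AE \<omega> in M. real_cond_exp M (F k) (\<lambda>\<omega>. (norm (u1 \<omega> - \<eta> *\<^sub>R e \<omega>))\<^sup>2 + (1 - \<gamma> * \<eta>) * (norm (u2 \<omega> - \<eta> *\<^sub>R e \<omega>))\<^sup>2
      + 2 * \<eta>\<^sup>2 * (1 - \<kappa>) / \<kappa> * \<Delta> k \<omega>) \<omega> =
      real_cond_exp M (F k) (\<lambda>\<omega>. (norm (u1 \<omega> - \<eta> *\<^sub>R e \<omega>))\<^sup>2 + (1 - \<gamma> * \<eta>) * (norm (u2 \<omega> - \<eta> *\<^sub>R e \<omega>))\<^sup>2) \<omega>
      + real_cond_exp M (F k) (\<lambda>\<omega>. 2 * \<eta>\<^sup>2 * (1 - \<kappa>) / \<kappa> * \<Delta> k \<omega>) \<omega>"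
      using i1 i2 i3 by (intro S.real_cond_exp_add) auto
    have c: "AE \<omega> in M. real_cond_exp M (F k) (\<lambda>\<omega>. (norm (u1 \<omega> - \<eta> *\<^sub>R e \<omega>))\<^sup>2 + (1 - \<gamma> * \<eta>) * (norm (u2 \<omega> - \<eta> *\<^sub>R e \<omega>))\<^sup>2) \<omega>
      = real_cond_exp M (F k) (\<lambda>\<omega>. (norm (u1 \<omega> - \<eta> *\<^sub>R e \<omega>))\<^sup>2) \<omega>
      + real_cond_exp M (F k) (\<lambda>\<omega>. (1 - \<gamma> * \<eta>) * (norm (u2 \<omega> - \<eta> *\<^sub>R e \<omega>))\<^sup>2) \<omega>"
      using i1 i2 by (intro S.real_cond_exp_add) auto
    from a b c show ?thesis by eventually_elim simp
  qed
  have E3: "AE \<omega> in M. real_cond_exp M (F k) (\<lambda>\<omega>. (1 - \<gamma> * \<eta>) * (norm (u2 \<omega> - \<eta> *\<^sub>R e \<omega>))\<^sup>2) \<omega>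
      = (1 - \<gamma> * \<eta>) * real_cond_exp M (F k) (\<lambda>\<omega>. (norm (u2 \<omega> - \<eta> *\<^sub>R e \<omega>))\<^sup>2) \<omega>"
    by (rule S.real_cond_exp_cmult) (intro sqi_diff sqi_scale u2i ei; measurable)
  have E4: "AE \<omega> in M. real_cond_exp M (F k) (\<lambda>\<omega>. 2 * \<eta>\<^sup>2 * (1 - \<kappa>) / \<kappa> * \<Delta> k \<omega>) \<omega>
      = 2 * \<eta>\<^sup>2 * (1 - \<kappa>) / \<kappa> * ED \<omega>"
    unfolding ED_def by (rule S.real_cond_exp_cmult[OF Delta_int])
  have E5: "AE \<omega> in M. real_cond_exp M (F k) (\<lambda>\<omega>. 2 * \<eta>\<^sup>2 * \<Theta>h / \<kappa> * (norm (x k \<omega> - x (k - 1) \<omega>))\<^sup>2) \<omega>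
      = 2 * \<eta>\<^sup>2 * \<Theta>h / \<kappa> * (norm (x k \<omega> - x (k - 1) \<omega>))\<^sup>2"
    by (rule S.real_cond_exp_F_meas[OF i4]) measurable
  have E6: "AE \<omega> in M. Ee \<omega> \<ge> 0"
    unfolding Ee_def by (rule S.real_cond_exp_pos) (auto, measurable)
  have E7: "AE \<omega> in M. Ee \<omega> \<le> ED \<omega>"
    unfolding Ee_def ED_def e_def by (rule var_bound)
  have E8: "AE \<omega> in M. ED \<omega> \<le> (1 - \<kappa>) * Dprev \<Delta> k \<omega> + \<Theta> * (norm (x k \<omega> - x (k - 1) \<omega>))\<^sup>2
            + \<Theta>h * (norm (x (k - 1) \<omega> - x (k - 2) \<omega>))\<^sup>2 + \<delta> k"
    unfolding ED_def by (rule Delta_rec)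
  show "AE \<omega> in M.
    real_cond_exp M (F k) (Pk G \<eta> \<gamma> \<kappa> \<Theta>h xs x \<xi> \<Delta> (Suc k)) \<omega>
      \<le> Pk G \<eta> \<gamma> \<kappa> \<Theta>h xs x \<xi> \<Delta> k \<omega>
        - (1 - 4 * \<rho> / \<eta> - 2 * L\<^sup>2 * \<eta> * (4 * \<rho> + 1 / \<gamma> + c))
            * (norm (yseq G \<eta> x \<xi> k \<omega> - x k \<omega>))\<^sup>2
        - (1 - \<gamma> * \<eta> - 2 * L\<^sup>2 * \<eta> * (4 * \<rho> + 1 / \<gamma> + c))
            * (norm (yseq G \<eta> x \<xi> k \<omega> - x (k - 1) \<omega>))\<^sup>2
        - \<eta> * (c * \<kappa> * L\<^sup>2 - 2 * \<eta> * (\<Theta> + \<Theta>h)) / \<kappa> * (norm (x k \<omega> - x (k - 1) \<omega>))\<^sup>2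
        + 2 * \<eta>\<^sup>2 * \<delta> k / \<kappa>"
    using E0 EQ E1 E2 E3 E4 E5 E6 E7 E8 AE_space
  proof eventually_elim
    case (elim \<omega>)
    have vi: "(norm (x k \<omega> - \<eta> *\<^sub>R G (x k \<omega>) + \<eta> *\<^sub>R G (x (k - 1) \<omega>) - xs))\<^sup>2 + \<eta>\<^sup>2 * Ee \<omega>
          + (1 - \<gamma> * \<eta>) * ((norm (\<eta> *\<^sub>R G (x (k - 1) \<omega>) - \<eta> *\<^sub>R G (x k \<omega>)))\<^sup>2 + \<eta>\<^sup>2 * Ee \<omega>)
          + 2 * \<eta>\<^sup>2 * (1 - \<kappa>) / \<kappa> * ED \<omega> + 2 * \<eta>\<^sup>2 * \<Theta>h / \<kappa> * (norm (x k \<omega> - x (k - 1) \<omega>))\<^sup>2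
      \<le> (norm (yseq G \<eta> x \<xi> k \<omega> - xs))\<^sup>2 + (1 - \<gamma> * \<eta>) * (norm (yseq G \<eta> x \<xi> k \<omega> - x (k - 1) \<omega>))\<^sup>2
        + 2 * \<eta>\<^sup>2 * (1 - \<kappa>) / \<kappa> * Dprev \<Delta> k \<omega> + 2 * \<eta>\<^sup>2 * \<Theta>h / \<kappa> * (norm (x (k - 1) \<omega> - x (k - 2) \<omega>))\<^sup>2
        - (1 - 4 * \<rho> / \<eta> - 2 * L\<^sup>2 * \<eta> * (4 * \<rho> + 1 / \<gamma> + c)) * (norm (yseq G \<eta> x \<xi> k \<omega> - x k \<omega>))\<^sup>2
        - (1 - \<gamma> * \<eta> - 2 * L\<^sup>2 * \<eta> * (4 * \<rho> + 1 / \<gamma> + c)) * (norm (yseq G \<eta> x \<xi> k \<omega> - x (k - 1) \<omega>))\<^sup>2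
        - \<eta> * (c * \<kappa> * L\<^sup>2 - 2 * \<eta> * (\<Theta> + \<Theta>h)) / \<kappa> * (norm (x k \<omega> - x (k - 1) \<omega>))\<^sup>2
        + 2 * \<eta>\<^sup>2 * \<delta> k / \<kappa>"
      by (rule vec_ineq[OF lip wm(2)[OF xiT[OF elim(11)]] wm(1) eta gamma c kappa Theta elim(8) elim(9) elim(10)])
         (simp add: yseq_def)
    have pk: "Pk G \<eta> \<gamma> \<kappa> \<Theta>h xs x \<xi> \<Delta> k \<omega> = (norm (yseq G \<eta> x \<xi> k \<omega> - xs))\<^sup>2 + (1 - \<gamma> * \<eta>) * (norm (yseq G \<eta> x \<xi> k \<omega> - x (k - 1) \<omega>))\<^sup>2
        + 2 * \<eta>\<^sup>2 * (1 - \<kappa>) / \<kappa> * Dprev \<Delta> k \<omega> + 2 * \<eta>\<^sup>2 * \<Theta>h / \<kappa> * (norm (x (k - 1) \<omega> - x (k - 2) \<omega>))\<^sup>2"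
      by (simp add: Pk_def)
    have L: "real_cond_exp M (F k) (Pk G \<eta> \<gamma> \<kappa> \<Theta>h xs x \<xi> \<Delta> (Suc k)) \<omega>
       = (norm (u1 \<omega>))\<^sup>2 + \<eta>\<^sup>2 * Ee \<omega> + (1 - \<gamma> * \<eta>) * ((norm (u2 \<omega>))\<^sup>2 + \<eta>\<^sup>2 * Ee \<omega>)
         + 2 * \<eta>\<^sup>2 * (1 - \<kappa>) / \<kappa> * ED \<omega> + 2 * \<eta>\<^sup>2 * \<Theta>h / \<kappa> * (norm (x k \<omega> - x (k - 1) \<omega>))\<^sup>2"
      unfolding elim(1) elim(2) elim(5) elim(3) elim(4) elim(6) elim(7) ..
    have n1: "(norm (u1 \<omega>))\<^sup>2 = (norm (x k \<omega> - \<eta> *\<^sub>R G (x k \<omega>) + \<eta> *\<^sub>R G (x (k - 1) \<omega>) - xs))\<^sup>2"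
      by (simp add: u1_def)
    have n2: "(norm (u2 \<omega>))\<^sup>2 = (norm (\<eta> *\<^sub>R G (x (k - 1) \<omega>) - \<eta> *\<^sub>R G (x k \<omega>)))\<^sup>2"
      by (simp add: u2_def)
    show ?case unfolding L pk n1 n2 using vi by linarith
  qed
qed

end
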